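(* Let $\Omega_1,\Omega_2\subset\mathbb{R}^n$ be bounded measurable sets, $\Omega:=\Omega_1\times\Omega_2$, and let $\Phi$ be a quasi-Young's function satisfying either (1) there is $C>0$ with $\Phi(xy)\le C\,\Phi(x)\Phi(y)$ for all $x,y\ge 0$; or (2) there are $C_1,C_2\ge 0$ with $\Phi(xy)\le C_1\,x\,\Phi(y)+C_2\,\Phi(x)\,y$ for all $x,y\ge0$, and $\Phi(t)/t\to\infty$ as $t\to\infty$. If $\mu_i\in L^\Phi(\Omega_i)$ for $i=1,2$, then $\mu_1\otimes\mu_2\in L^\Phi(\Omega)$, where $(\mu_1\otimes\mu_2)(x_1,x_2):=\mu_1(x_1)\mu_2(x_2)$.
   Context: A Young's function is a function of the form $\Phi(t)=\int_0^t\varphi(s)\,ds$ for $t\ge 0$, where $\varphi:[0,\infty)\to[0,\infty]$ is increasing and lower semicontinuous with $\varphi(0)=0$, and $\varphi$ is neither identically zero nor identically $+\infty$ on $(0,\infty)$. A quasi-Young's function induced by a Young's function $\Phi$ is a convex, lower semicontinuous function $\check\Phi:[0,\infty)\to(-\infty,\infty]$, bounded from below, for which there is $t_0\ge 0$ with $\check\Phi(t)=\Phi(t)-\Phi(t_0)$ for all $t\ge t_0$ and $\check\Phi(t)\le 0$ for all $t<t_0$ (every Young's function is a quasi-Young's function, with $t_0=0$). For a measurable set $U\subset\mathbb{R}^d$ and a quasi-Young's function $\Phi$, the Luxemburg norm of a measurable $f:U\to\mathbb{R}$ is $\|f\|_\Phi:=\inf\{\lambda\ge 0:\int_U\Phi(|f|/\lambda)\,dx\le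 1\}$, and the Orlicz space is $L^\Phi(U):=\{f:U\to\mathbb{R}\text{ measurable}:\|f\|_\Phi<\infty\}$. *)

theory Defs
  imports "HOL-Analysis.Analysis"
begin

text \<open>Lower semicontinuity on [0,oo) of an extended-valued function (only the values on
  [0,oo) matter; all functions below are regarded as functions on [0,oo)).\<close>
definition lsc_nonneg :: "(real \<Rightarrow> 'b::{linorder_topology,complete_linorder}) \<Rightarrow> bool" where
  "lsc_nonneg f \<longleftrightarrow> (\<forall>t\<ge>0. f t \<le> Liminf (at t within {0..}) f)"

definition young_fun :: "(real \<Rightarrow> ereal) \<Rightarrow> bool" where
  "young_fun \<Phi> \<longleftrightarrow> (\<exists>\<phi> :: real \<Rightarrow> ennreal.
      mono_on {0..} \<phi> \<and> lsc_nonneg \<phi> \<and> \<phi> 0 = 0 \<and>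
      (\<exists>s>0. \<phi> s \<noteq> 0) \<and> (\<exists>s>0. \<phi> s \<noteq> \<infinity>) \<and>
      (\<forall>t\<ge>0. \<Phi> t = enn2ereal (set_nn_integral lborel {0..t} \<phi>)))"

definition convex_nonneg :: "(real \<Rightarrow> ereal) \<Rightarrow> bool" where
  "convex_nonneg f \<longleftrightarrow> (\<forall>x\<ge>0. \<forall>y\<ge>0. \<forall>u::real. 0 \<le> u \<and> u \<le> 1 \<longrightarrow>
      f (u * x + (1 - u) * y) \<le> ereal u * f x + ereal (1 - u) * f y)"

definition quasi_young_fun :: "(real \<Rightarrow> ereal) \<Rightarrow> bool" where
  "quasi_young_fun \<Phi> \<longleftrightarrow>
     convex_nonneg \<Phi> \<and> lsc_nonneg \<Phi> \<and> (\<forall>t\<ge>0. \<Phi> t \<noteq> -\<infinity>) \<and>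
     (\<exists>c::real. \<forall>t\<ge>0. ereal c \<le> \<Phi> t) \<and>
     (\<exists>\<Psi> t0. young_fun \<Psi> \<and> t0 \<ge> 0 \<and> \<Psi> t0 \<noteq> \<infinity> \<and>
        (\<forall>t\<ge>t0. \<Phi> t = \<Psi> t - \<Psi> t0) \<and> (\<forall>t. 0 \<le> t \<and> t < t0 \<longrightarrow> \<Phi> t \<le> 0))"

definition ereal_integral_on :: "'a::euclidean_space set \<Rightarrow> ('a \<Rightarrow> ereal) \<Rightarrow> ereal" where
  "ereal_integral_on U g =
     enn2ereal (\<integral>\<^sup>+ x. e2ennreal (max 0 (g x)) \<partial>lebesgue_on U)
     - enn2ereal (\<integral>\<^sup>+ x. e2ennreal (max 0 (- g x)) \<partial>lebesgue_on U)"

text \<open>Luxemburg norm; the infimum is over lambda > 0 (convention Phi(t/0)=oo for t>0).\<close>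
definition luxemburg_norm :: "(real \<Rightarrow> ereal) \<Rightarrow> 'a::euclidean_space set \<Rightarrow> ('a \<Rightarrow> real) \<Rightarrow> ereal" where
  "luxemburg_norm \<Phi> U f =
     Inf {ereal l | l. l > 0 \<and> ereal_integral_on U (\<lambda>x. \<Phi> (\<bar>f x\<bar> / l)) \<le> 1}"

definition orlicz_space :: "(real \<Rightarrow> ereal) \<Rightarrow> 'a::euclidean_space set \<Rightarrow> ('a \<Rightarrow> real) set" where
  "orlicz_space \<Phi> U = {f. f \<in> borel_measurable (lebesgue_on U) \<and> luxemburg_norm \<Phi> U f < \<infinity>}"

definition tensor :: "('a \<Rightarrow> real) \<Rightarrow> ('b \<Rightarrow> real) \<Rightarrow> ('a \<times> 'b \<Rightarrow> real)" where
  "tensor \<mu>1 \<mu>2 = (\<lambda>(x1, x2). \<mu>1 x1 * \<mu>2 x2)"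

end

theory Submission
  imports Defs
begin


lemma lsc_abs_open:
  fixes \<Phi> :: "real \<Rightarrow> ereal"
  assumes "lsc_nonneg \<Phi>"
  shows "open {x. y < \<Phi> \<bar>x\<bar>}"
  unfolding open_dist
proof (intro ballI)
  fix x assume "x \<in> {x. y < \<Phi> \<bar>x\<bar>}"
  hence yl: "y < \<Phi> \<bar>x\<bar>" by simp
  have "\<Phi> \<bar>x\<bar> \<le> Liminf (at \<bar>x\<bar> within {0..}) \<Phi>"
    using assms unfolding lsc_nonneg_def by simp
  hence "eventually (\<lambda>s. y < \<Phi> s) (at \<bar>x\<bar> within {0..})"
    using yl le_Liminf_iff by blast
  then obtain d where d: "d > 0" "\<And>s. s \<in> {0..} \<Longrightarrow> s \<noteq> \<bar>x\<bar> \<Longrightarrow> dist s \<bar>x\<bar> < d \<Longrightarrow> y < \<Phi> s"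
    unfolding eventually_at by blast
  show "\<exists>e>0. \<forall>z. dist z x < e \<longrightarrow> z \<in> {x. y < \<Phi> \<bar>x\<bar>}"
  proof (intro exI[of _ d] conjI allI impI)
    show "d > 0" using d by simp
  next
    fix z assume "dist z x < d"
    hence "dist \<bar>z\<bar> \<bar>x\<bar> < d" by (simp add: dist_real_def)
    thus "z \<in> {x. y < \<Phi> \<bar>x\<bar>}"
      using d(2)[of "\<bar>z\<bar>"] yl by (cases "\<bar>z\<bar> = \<bar>x\<bar>") auto
  qed
qed

lemma lsc_abs_measurable:
  fixes \<Phi> :: "real \<Rightarrow> ereal"
  assumes "lsc_nonneg \<Phi>"
  shows "(\<lambda>x. \<Phi> \<bar>x\<bar>) \<in> borel_measurable borel"
  by (rule borel_measurableI_greater) (use lsc_abs_open[OF assms] in auto)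

lemma e2_max: "e2ennreal (max 0 (ereal a)) = ennreal (max 0 a)"
  by (cases "0 \<le> a") (auto simp: max_def e2ennreal_neg)

lemma qy_phi0:
  assumes "quasi_young_fun \<Phi>" shows "\<Phi> 0 \<le> 0"
proof -
  obtain \<Psi> t0 where yf: "young_fun \<Psi>" "t0 \<ge> 0" "\<Psi> t0 \<noteq> \<infinity>" "\<forall>t\<ge>t0. \<Phi> t = \<Psi> t - \<Psi> t0"
      "\<forall>t. 0 \<le> t \<and> t < t0 \<longrightarrow> \<Phi> t \<le> 0"
    using assms unfolding quasi_young_fun_def by blast
  show ?thesis
  proof (cases "t0 = 0")
    case True
    obtain \<phi> where "\<forall>t\<ge>0. \<Psi> t = enn2ereal (set_nn_integral lborel {0..t} \<phi>)"
      using yf(1) unfolding young_fun_def by blast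
    hence "\<Psi> 0 \<ge> 0" by simp
    with yf True show ?thesis by (cases "\<Psi> 0") auto
  next
    case False with yf show ?thesis by auto
  qed
qed

lemma qy_scale:
  assumes qy: "quasi_young_fun \<Phi>" and s: "0 \<le> s" "s \<le> 1" and t: "0 \<le> t"
  shows "\<Phi> (s*t) \<le> ereal s * \<Phi> t"
proof -
  have c: "convex_nonneg \<Phi>" using qy by (simp add: quasi_young_fun_def)
  have "\<Phi> (s*t + (1-s)*0) \<le> ereal s * \<Phi> t + ereal (1-s) * \<Phi> 0"
    using c s t unfolding convex_nonneg_def by (metis order_refl)
  moreover have "ereal (1-s) * \<Phi> 0 \<le> 0"
  proof -
    have "\<Phi> 0 \<noteq> -\<infinity>" using qy by (simp add: quasi_young_fun_def)
    then show ?thesis using qy_phi0[OF qy] s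
      by (cases "\<Phi> 0") (auto simp: mult_nonneg_nonpos)
  qed
  ultimately show ?thesis
    by (metis add.right_neutral add_left_mono mult_zero_right add_0 order.trans)
qed

lemma qy_scale_enn:
  assumes qy: "quasi_young_fun \<Phi>" and s: "0 \<le> s" "s \<le> 1" and t: "0 \<le> t"
  shows "e2ennreal (max 0 (\<Phi> (s*t))) \<le> ennreal s * e2ennreal (max 0 (\<Phi> t))"
proof -
  have le: "\<Phi> (s*t) \<le> ereal s * \<Phi> t" by (rule qy_scale[OF assms])
  have ninf: "\<Phi> t \<noteq> -\<infinity>" using qy t by (simp add: quasi_young_fun_def)
  show ?thesis
  proof (cases "\<Phi> t")
    case (real r)
    have "e2ennreal (max 0 (\<Phi> (s*t))) \<le> e2ennreal (max 0 (ereal (s*r)))"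
      using le real by (intro e2ennreal_mono max.mono) auto
    also have "\<dots> = ennreal (s * max 0 r)"
    proof -
      have "max 0 (ereal (s*r)) = ereal (s * max 0 r)"
      proof (cases "r \<ge> 0")
        case True thus ?thesis using s by (simp add: max_def)
      next
        case False hence "s*r \<le> 0" using s by (simp add: mult_nonneg_nonpos)
        thus ?thesis using False by (simp add: max_def)
      qed
      thus ?thesis by simp
    qed
    also have "\<dots> = ennreal s * e2ennreal (max 0 (\<Phi> t))"
      using s real by (simp add: e2_max ennreal_mult)
    finally show ?thesis .
  next
    case PInf
    show ?thesis
    proof (cases "s = 0")
      case True
      then show ?thesis using qy_phi0[OF qy] by (simp add: e2ennreal_neg max_def)
    next
      case False
      then show ?thesis using PInf s by (simp add: ennreal_mult_top)
    qed
  qed (use ninf in auto)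
qed

lemma ab_bound:
  fixes a b E :: real assumes "-E \<le> a" "-E \<le> b" "0 \<le> E"
  shows "a*b \<le> (max 0 a + E)*(max 0 b + E)"
proof -
  have R: "0 \<le> (max 0 a + E)*(max 0 b + E)" using assms by simp
  consider "a \<ge> 0" "b \<ge> 0" | "a \<ge> 0" "b < 0" | "a < 0" "b \<ge> 0" | "a < 0" "b < 0" by linarith
  then show ?thesis
  proof cases
    case 1 thus ?thesis using assms by (simp add: mult_mono)
  next
    case 2
    have "a*b \<le> 0" using 2 by (simp add: mult_nonneg_nonpos)
    thus ?thesis using R by linarith
  next
    case 3
    have "a*b \<le> 0" using 3 by (simp add: mult_nonpos_nonneg)
    thus ?thesis using R by linarith
  next
    case 4
    have "a*b = (-a)*(-b)" by simp
    also have "\<dots> \<le> E*E" using 4 assms by (intro mult_mono) auto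
    also have "\<dots> \<le> (max 0 a + E)*(max 0 b + E)" using 4 assms by simp
    finally show ?thesis .
  qed
qed

lemma qy_core:
  assumes qy: "quasi_young_fun \<Phi>"
    and cond: "(\<exists>C>0. \<forall>x\<ge>0. \<forall>y\<ge>0. \<Phi> (x * y) \<le> ereal C * \<Phi> x * \<Phi> y)
       \<or> ((\<exists>C1\<ge>0. \<exists>C2\<ge>0. \<forall>x\<ge>0. \<forall>y\<ge>0.
              \<Phi> (x * y) \<le> ereal C1 * ereal x * \<Phi> y + ereal C2 * \<Phi> x * ereal y)
           \<and> ((\<lambda>t. \<Phi> t / ereal t) \<longlongrightarrow> \<infinity>) at_top)"
  shows "\<exists>D>0. \<exists>E>0. \<forall>x\<ge>0. \<forall>y\<ge>0. \<forall>a b. \<Phi> x = ereal a \<longrightarrow> \<Phi> y = ereal b \<longrightarrow>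
            \<Phi> (x*y) \<le> ereal (D * (max 0 a + E) * (max 0 b + E))"
proof -
  obtain c where c: "\<forall>t\<ge>0. ereal c \<le> \<Phi> t" using qy unfolding quasi_young_fun_def by blast
  define K where "K = \<bar>c\<bar>"
  have Kb: "\<And>t a. t \<ge> 0 \<Longrightarrow> \<Phi> t = ereal a \<Longrightarrow> -K \<le> a"
  proof -
    fix t a assume "t \<ge> 0" "\<Phi> t = ereal a"
    hence "ereal c \<le> ereal a" using c by metis
    hence "c \<le> a" by simp
    thus "-K \<le> a" unfolding K_def by linarith
  qed
  from cond show ?thesis
  proof
    assume "\<exists>C>0. \<forall>x\<ge>0. \<forall>y\<ge>0. \<Phi> (x * y) \<le> ereal C * \<Phi> x * \<Phi> y"
    then obtain C where C: "C > 0" "\<forall>x\<ge>0. \<forall>y\<ge>0. \<Phi> (x * y) \<le> ereal C * \<Phi> x * \<Phi> y" by blast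
    define E1 where "E1 = K + 1"
    have key: "\<Phi> (x*y) \<le> ereal (C * (max 0 a + E1) * (max 0 b + E1))"
      if xy: "x \<ge> 0" "y \<ge> 0" and ab: "\<Phi> x = ereal a" "\<Phi> y = ereal b" for x y a b
    proof -
      have "\<Phi> (x*y) \<le> ereal C * \<Phi> x * \<Phi> y" using C(2) xy by blast
      hence "\<Phi> (x*y) \<le> ereal (C*(a*b))" using ab by (simp add: mult.assoc)
      moreover have "C*(a*b) \<le> C*((max 0 a + E1) * (max 0 b + E1))"
        using C(1) Kb[OF xy(1) ab(1)] Kb[OF xy(2) ab(2)] K_def E1_def
        by (intro mult_left_mono ab_bound) auto
      ultimately show "\<Phi> (x*y) \<le> ereal (C * (max 0 a + E1) * (max 0 b + E1))"
        by (simp add: mult.assoc) (metis ereal_less_eq(3) order.trans)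
    qed
    have "E1 > 0" unfolding E1_def K_def by simp
    thus ?thesis using key C(1) by blast
  next
    assume "(\<exists>C1\<ge>0. \<exists>C2\<ge>0. \<forall>x\<ge>0. \<forall>y\<ge>0.
              \<Phi> (x * y) \<le> ereal C1 * ereal x * \<Phi> y + ereal C2 * \<Phi> x * ereal y)
           \<and> ((\<lambda>t. \<Phi> t / ereal t) \<longlongrightarrow> \<infinity>) at_top"
    then obtain C1 C2 where C: "C1 \<ge> 0" "C2 \<ge> 0"
       "\<forall>x\<ge>0. \<forall>y\<ge>0. \<Phi> (x * y) \<le> ereal C1 * ereal x * \<Phi> y + ereal C2 * \<Phi> x * ereal y"
      and lim: "((\<lambda>t. \<Phi> t / ereal t) \<longlongrightarrow> \<infinity>) at_top" by blast
    have "eventually (\<lambda>t. 1 < \<Phi> t / ereal t) at_top"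
      using order_tendstoD(1)[OF lim, of 1] by simp
    then obtain N where N: "\<And>t. t \<ge> N \<Longrightarrow> 1 < \<Phi> t / ereal t"
      unfolding eventually_at_top_linorder by blast
    define T where "T = max N 1"
    have T: "\<And>x a. x \<ge> 0 \<Longrightarrow> \<Phi> x = ereal a \<Longrightarrow> x \<le> max 0 a + T"
    proof -
      fix x a assume x: "x \<ge> 0" "\<Phi> x = ereal a"
      show "x \<le> max 0 a + T"
      proof (cases "x \<ge> T")
        case True
        hence "x \<ge> N" "x > 0" unfolding T_def by auto
        hence "1 < ereal (a / x)" using N[of x] x by simp
        hence "x < a" using \<open>x > 0\<close> by (simp add: field_simps)
        moreover have "a \<le> max 0 a" "1 \<le> T" unfolding T_def by auto
        ultimately show ?thesis by linarith
      next
        case False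
        moreover have "0 \<le> max 0 a" by simp
        ultimately show ?thesis by linarith
      qed
    qed
    have T0: "T \<ge> 0" unfolding T_def by simp
    define E where "E = T + K + 1"
    have key: "\<Phi> (x*y) \<le> ereal ((C1+C2+1) * (max 0 a + E) * (max 0 b + E))"
      if xy: "x \<ge> 0" "y \<ge> 0" and ab: "\<Phi> x = ereal a" "\<Phi> y = ereal b" for x y a b
    proof -
      define P where "P = (max 0 a + E) * (max 0 b + E)"
      have P0: "P \<ge> 0" unfolding P_def E_def K_def using T0 by simp
      have "\<Phi> (x*y) \<le> ereal C1 * ereal x * \<Phi> y + ereal C2 * \<Phi> x * ereal y" using C(3) xy by blast
      hence h0: "\<Phi> (x*y) \<le> ereal (C1*x*b + C2*a*y)" using ab by simp
      have h1: "C1*x*b \<le> C1 * P"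
      proof -
        have "x*b \<le> x * max 0 b" using xy by (simp add: mult_left_mono)
        also have "\<dots> \<le> P" unfolding P_def using T[OF xy(1) ab(1)] xy T0
          by (intro mult_mono) (auto simp: E_def K_def)
        finally show ?thesis using C(1) by (simp add: mult_left_mono mult.assoc)
      qed
      have h2: "C2*a*y \<le> C2 * P"
      proof -
        have "a*y \<le> max 0 a * y" using xy by (simp add: mult_right_mono)
        also have "\<dots> \<le> P" unfolding P_def using T[OF xy(2) ab(2)] xy T0
          by (intro mult_mono) (auto simp: E_def K_def)
        finally show ?thesis using C(2) by (simp add: mult_left_mono mult.assoc)
      qed
      have "(C1+C2+1)*P = C1*P + C2*P + P" by (simp add: algebra_simps)
      hence "C1*x*b + C2*a*y \<le> (C1+C2+1) * P" using P0 h1 h2 by linarith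
      with h0 show "\<Phi> (x*y) \<le> ereal ((C1+C2+1) * (max 0 a + E) * (max 0 b + E))"
        unfolding P_def by (simp add: mult.assoc) (metis ereal_less_eq(3) order.trans)
    qed
    have "E > 0" "C1+C2+1 > 0" using C T0 unfolding E_def K_def by auto
    thus ?thesis using key by blast
  qed
qed

lemma qy_enn_bound:
  assumes qy: "quasi_young_fun \<Phi>" and DE: "D > 0" "E > 0"
    and core: "\<forall>x\<ge>0. \<forall>y\<ge>0. \<forall>a b. \<Phi> x = ereal a \<longrightarrow> \<Phi> y = ereal b \<longrightarrow>
            \<Phi> (x*y) \<le> ereal (D * (max 0 a + E) * (max 0 b + E))"
    and xy: "x \<ge> 0" "y \<ge> 0"
  shows "e2ennreal (max 0 (\<Phi> (x*y))) \<le> ennreal D * (e2ennreal (max 0 (\<Phi> x)) + ennreal E) * (e2ennreal (max 0 (\<Phi> y)) + ennreal E)"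
proof -
  have nx: "\<Phi> x \<noteq> -\<infinity>" and ny: "\<Phi> y \<noteq> -\<infinity>" using qy xy by (auto simp: quasi_young_fun_def)
  show ?thesis
  proof (cases "\<Phi> x = \<infinity> \<or> \<Phi> y = \<infinity>")
    case True
    then have "ennreal D * (e2ennreal (max 0 (\<Phi> x)) + ennreal E) * (e2ennreal (max 0 (\<Phi> y)) + ennreal E) = top"
      using DE by (auto simp: ennreal_mult_eq_top_iff)
    then show ?thesis by simp
  next
    case False
    then obtain a b where ab: "\<Phi> x = ereal a" "\<Phi> y = ereal b" using nx ny
      by (metis ereal_cases)
    define A where "A = max 0 a + E"
    define B where "B = max 0 b + E"
    have A0: "A \<ge> 0" and B0: "B \<ge> 0" using DE by (auto simp: A_def B_def)
    have pos: "0 \<le> D*A*B" using DE A0 B0 by simp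
    have "\<Phi> (x*y) \<le> ereal (D*A*B)" using core xy ab unfolding A_def B_def by blast
    hence "e2ennreal (max 0 (\<Phi> (x*y))) \<le> e2ennreal (max 0 (ereal (D*A*B)))"
      by (intro e2ennreal_mono max.mono) auto
    also have "max 0 (ereal (D*A*B)) = ereal (D*A*B)" using pos by (simp add: max.absorb2)
    also have "e2ennreal (ereal (D*A*B)) = ennreal D * ennreal A * ennreal B"
      using DE A0 B0 by (simp add: ennreal_mult)
    also have "ennreal A = e2ennreal (max 0 (\<Phi> x)) + ennreal E"
    proof -
      show ?thesis using ab DE e2_max[of a] unfolding A_def by (simp add: ennreal_plus)
    qed
    also have "ennreal B = e2ennreal (max 0 (\<Phi> y)) + ennreal E"
    proof -
      show ?thesis using ab DE e2_max[of b] unfolding B_def by (simp add: ennreal_plus)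
    qed
    finally show ?thesis .
  qed
qed



lemma null_times_UNIV:
  fixes N :: "'a::euclidean_space set"
  assumes "N \<in> null_sets lborel"
  shows "N \<times> (UNIV :: 'b::euclidean_space set) \<in> null_sets (lborel :: ('a \<times> 'b) measure)"
     and "(UNIV :: 'b set) \<times> N \<in> null_sets (lborel :: ('b \<times> 'a) measure)"
proof -
  have "N \<times> (UNIV :: 'b set) \<in> null_sets (lborel \<Otimes>\<^sub>M (lborel :: 'b measure))"
    using assms by (intro lborel.times_in_null_sets1) auto
  thus "N \<times> (UNIV :: 'b::euclidean_space set) \<in> null_sets (lborel :: ('a \<times> 'b) measure)"
    by (simp add: lborel_prod)
  have "(UNIV :: 'b set) \<times> N \<in> null_sets ((lborel :: 'b measure) \<Otimes>\<^sub>M lborel)"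
    using assms by (intro lborel.times_in_null_sets2) auto
  thus "(UNIV :: 'b set) \<times> N \<in> null_sets (lborel :: ('b \<times> 'a) measure)"
    by (simp add: lborel_prod)
qed

lemma prod_meas:
  fixes f1 :: "'a::euclidean_space \<Rightarrow> real" and f2 :: "'b::euclidean_space \<Rightarrow> real"
  assumes f1: "f1 \<in> borel_measurable lebesgue" and f2: "f2 \<in> borel_measurable lebesgue"
  shows "(\<lambda>z. f1 (fst z) * f2 (snd z)) \<in> borel_measurable (lebesgue :: ('a \<times> 'b) measure)"
proof -
  obtain g1 where g1: "g1 \<in> borel_measurable lborel" "AE x in lborel. f1 x = g1 x"
    using completion_ex_borel_measurable_real[OF f1] by blast
  obtain g2 where g2: "g2 \<in> borel_measurable lborel" "AE x in lborel. f2 x = g2 x"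
    using completion_ex_borel_measurable_real[OF f2] by blast
  obtain N1 where N1: "{x \<in> space lborel. \<not> f1 x = g1 x} \<subseteq> N1" "emeasure lborel N1 = 0" "N1 \<in> sets lborel"
    using g1(2) by (rule AE_E)
  obtain N2 where N2: "{x \<in> space lborel. \<not> f2 x = g2 x} \<subseteq> N2" "emeasure lborel N2 = 0" "N2 \<in> sets lborel"
    using g2(2) by (rule AE_E)
  have n1: "N1 \<times> (UNIV :: 'b set) \<in> null_sets (lborel :: ('a \<times> 'b) measure)"
    using N1(2,3) null_times_UNIV(1)[of N1] by (auto simp: null_sets_def)
  have n2: "(UNIV :: 'a set) \<times> N2 \<in> null_sets (lborel :: ('a \<times> 'b) measure)"
    using N2(2,3) null_times_UNIV(2)[of N2] by (auto simp: null_sets_def)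
  have gm1: "g1 \<in> borel_measurable borel" and gm2: "g2 \<in> borel_measurable borel" using g1 g2 by auto
  have G: "(\<lambda>z. g1 (fst z) * g2 (snd z)) \<in> borel_measurable (lborel :: ('a \<times> 'b) measure)"
  proof -
    note [measurable] = gm1 gm2
    have "(\<lambda>z. g1 (fst z) * g2 (snd z)) \<in> borel_measurable (borel \<Otimes>\<^sub>M borel)" by measurable
    thus ?thesis by (simp add: borel_prod)
  qed
  have "AE z in (lborel :: ('a \<times> 'b) measure). g1 (fst z) * g2 (snd z) = f1 (fst z) * f2 (snd z)"
  proof (rule AE_I'[OF null_sets.Un[OF n1 n2]])
    show "{z \<in> space lborel. \<not> g1 (fst z) * g2 (snd z) = f1 (fst z) * f2 (snd z)} \<subseteq> N1 \<times> UNIV \<union> UNIV \<times> N2"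
    proof
      fix z assume "z \<in> {z \<in> space lborel. \<not> g1 (fst z) * g2 (snd z) = f1 (fst z) * f2 (snd z)}"
      hence ne: "\<not> g1 (fst z) * g2 (snd z) = f1 (fst z) * f2 (snd z)" by simp
      show "z \<in> N1 \<times> UNIV \<union> UNIV \<times> N2"
      proof (rule ccontr)
        assume "z \<notin> N1 \<times> UNIV \<union> UNIV \<times> N2"
        hence z1: "fst z \<notin> N1" and z2: "snd z \<notin> N2" by (metis UNIV_I UnCI mem_Times_iff)+
        have e1: "f1 (fst z) = g1 (fst z)"
        proof (rule ccontr)
          assume "f1 (fst z) \<noteq> g1 (fst z)"
          hence "fst z \<in> {x \<in> space lborel. f1 x \<noteq> g1 x}" by simp
          hence "fst z \<in> N1" using N1(1) by (rule rev_subsetD)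
          thus False using z1 by contradiction
        qed
        have e2: "f2 (snd z) = g2 (snd z)"
        proof (rule ccontr)
          assume "f2 (snd z) \<noteq> g2 (snd z)"
          hence "snd z \<in> {x \<in> space lborel. f2 x \<noteq> g2 x}" by simp
          hence "snd z \<in> N2" using N2(1) by (rule rev_subsetD)
          thus False using z2 by contradiction
        qed
        have "g1 (fst z) * g2 (snd z) = f1 (fst z) * f2 (snd z)"
          by (subst e1, subst e2, rule refl)
        thus False using ne by contradiction
      qed
    qed
  qed
  hence AEL: "AE z in (lebesgue :: ('a \<times> 'b) measure). g1 (fst z) * g2 (snd z) = f1 (fst z) * f2 (snd z)"
    by (rule AE_completion)
  have GL: "(\<lambda>z. g1 (fst z) * g2 (snd z)) \<in> borel_measurable (lebesgue :: ('a \<times> 'b) measure)"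
    using G by (rule measurable_completion)
  show ?thesis by (rule borel_measurable_AE[OF GL AEL])
qed

lemma times_lebesgue:
  fixes A :: "'a::euclidean_space set" and B :: "'b::euclidean_space set"
  assumes "A \<in> sets lebesgue" "B \<in> sets lebesgue"
  shows "A \<times> B \<in> sets lebesgue"
proof -
  have "(\<lambda>z. indicator A (fst z) * indicator B (snd z) :: real) \<in> borel_measurable (lebesgue :: ('a \<times> 'b) measure)"
    using assms by (intro prod_meas) auto
  moreover have "(\<lambda>z. indicator A (fst z) * indicator B (snd z) :: real) = indicator (A \<times> B)"
    by (auto simp: indicator_def fun_eq_iff)
  ultimately have "(indicator (A \<times> B) :: _ \<Rightarrow> real) \<in> borel_measurable (lebesgue :: ('a \<times> 'b) measure)" by simp
  thus ?thesis by (subst (asm) borel_measurable_indicator_iff) simp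
qed

lemma borel_majorant:
  fixes f :: "'a::euclidean_space \<Rightarrow> ennreal"
  assumes "f \<in> borel_measurable lebesgue"
  shows "\<exists>g \<in> borel_measurable lborel. (\<forall>x. f x \<le> g x) \<and> integral\<^sup>N lborel g = integral\<^sup>N lebesgue f"
proof -
  obtain g' where g': "g' \<in> borel_measurable lborel" "AE x in lborel. f x = g' x"
    using completion_ex_borel_measurable[OF assms] by blast
  obtain N where N: "{x \<in> space lborel. \<not> f x = g' x} \<subseteq> N" "emeasure lborel N = 0" "N \<in> sets lborel"
    using g'(2) by (rule AE_E)
  define g where "g x = (if x \<in> N then \<infinity> else g' x)" for x
  have "g \<in> borel_measurable lborel" unfolding g_def using g'(1) N(3) by measurable
  moreover have "\<forall>x. f x \<le> g x"
  proof
    fix x show "f x \<le> g x"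
    proof (cases "x \<in> N")
      case True thus ?thesis by (simp add: g_def)
    next
      case False hence "f x = g' x" using N(1) by auto
      thus ?thesis using False by (simp add: g_def)
    qed
  qed
  moreover have "integral\<^sup>N lborel g = integral\<^sup>N lebesgue f"
  proof -
    have "AE x in lborel. x \<notin> N" using N by (intro AE_not_in) auto
    hence "AE x in lborel. g x = f x" using g'(2) unfolding g_def by eventually_elim auto
    hence "integral\<^sup>N lborel g = integral\<^sup>N lborel f" by (rule nn_integral_cong_AE)
    also have "\<dots> = integral\<^sup>N lebesgue f" by (simp add: nn_integral_completion)
    finally show ?thesis .
  qed
  ultimately show ?thesis by blast
qed



lemma orlicz_get:
  assumes "\<mu> \<in> orlicz_space \<Phi> \<Omega>"
  shows "\<mu> \<in> borel_measurable (lebesgue_on \<Omega>)"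
    "\<exists>l>0. ereal_integral_on \<Omega> (\<lambda>x. \<Phi> (\<bar>\<mu> x\<bar> / l)) \<le> 1"
proof -
  show "\<mu> \<in> borel_measurable (lebesgue_on \<Omega>)" using assms by (simp add: orlicz_space_def)
  have lt: "luxemburg_norm \<Phi> \<Omega> \<mu> < \<infinity>" using assms by (simp add: orlicz_space_def)
  show "\<exists>l>0. ereal_integral_on \<Omega> (\<lambda>x. \<Phi> (\<bar>\<mu> x\<bar> / l)) \<le> 1"
  proof (rule ccontr)
    assume "\<not> ?thesis"
    hence E: "{ereal l | l. l > 0 \<and> ereal_integral_on \<Omega> (\<lambda>x. \<Phi> (\<bar>\<mu> x\<bar> / l)) \<le> 1} = {}" by auto
    have "luxemburg_norm \<Phi> \<Omega> \<mu> = \<infinity>" unfolding luxemburg_norm_def E by (simp add: top_ereal_def)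
    thus False using lt by simp
  qed
qed

lemma lebesgue_finite:
  fixes \<Omega> :: "'a::euclidean_space set"
  assumes "\<Omega> \<in> sets lebesgue" "bounded \<Omega>"
  shows "emeasure lebesgue \<Omega> < \<infinity>"
  using fmeasurableD2[OF bounded_set_imp_lmeasurable[OF assms(2,1)]] by (simp add: top.not_eq_extremum)

lemma pos_finite:
  fixes \<Omega> :: "'a::euclidean_space set"
  assumes qy: "quasi_young_fun \<Phi>" and \<Omega>: "\<Omega> \<in> sets lebesgue" "bounded \<Omega>" and l: "l > 0"
    and int: "ereal_integral_on \<Omega> (\<lambda>x. \<Phi> (\<bar>f x\<bar> / l)) \<le> 1"
  shows "(\<integral>\<^sup>+x. e2ennreal (max 0 (\<Phi> (\<bar>f x\<bar> / l))) \<partial>lebesgue_on \<Omega>) < \<infinity>"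
proof -
  obtain c where c: "\<forall>t\<ge>0. ereal c \<le> \<Phi> t" using qy unfolding quasi_young_fun_def by blast
  define K where "K = \<bar>c\<bar>"
  have pw: "e2ennreal (max 0 (- \<Phi> (\<bar>f x\<bar> / l))) \<le> ennreal K" for x
  proof -
    have t: "\<bar>f x\<bar> / l \<ge> 0" using l by simp
    have "max 0 (- \<Phi> (\<bar>f x\<bar> / l)) \<le> ereal K"
    proof -
      have ce: "ereal c \<le> \<Phi> (\<bar>f x\<bar> / l)" using c t by blast
      have "- \<Phi> (\<bar>f x\<bar> / l) \<le> ereal K"
      proof (cases "\<Phi> (\<bar>f x\<bar> / l)")
        case (real r) thus ?thesis using ce unfolding K_def by simp
      qed (use ce in auto)
      moreover have "0 \<le> ereal K" unfolding K_def by simp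
      ultimately show ?thesis by simp
    qed
    hence "e2ennreal (max 0 (- \<Phi> (\<bar>f x\<bar> / l))) \<le> e2ennreal (ereal K)" by (rule e2ennreal_mono)
    thus ?thesis by simp
  qed
  define neg where "neg = (\<integral>\<^sup>+x. e2ennreal (max 0 (- \<Phi> (\<bar>f x\<bar> / l))) \<partial>lebesgue_on \<Omega>)"
  define pos where "pos = (\<integral>\<^sup>+x. e2ennreal (max 0 (\<Phi> (\<bar>f x\<bar> / l))) \<partial>lebesgue_on \<Omega>)"
  have "neg \<le> (\<integral>\<^sup>+x. ennreal K \<partial>lebesgue_on \<Omega>)" unfolding neg_def
    by (rule nn_integral_mono) (rule pw)
  also have "\<dots> = ennreal K * emeasure lebesgue \<Omega>"
    using \<Omega>(1) by (simp add: emeasure_restrict_space space_restrict_space)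
  also have "\<dots> < \<infinity>" using lebesgue_finite[OF \<Omega>] by (simp add: ennreal_mult_less_top)
  finally have negf: "neg < top" by simp
  then obtain r where r: "enn2ereal neg = ereal r"
    by (cases neg) auto
  have "enn2ereal pos - enn2ereal neg \<le> 1" using int unfolding ereal_integral_on_def pos_def neg_def .
  show ?thesis
  proof (cases pos)
    case top
    with \<open>enn2ereal pos - enn2ereal neg \<le> 1\<close> r show ?thesis by simp
  next
    case (real p) thus ?thesis unfolding pos_def by simp
  qed
qed

lemma Q_lemma:
  fixes \<Omega> :: "'a::euclidean_space set" and \<mu> :: "'a \<Rightarrow> real"
  assumes qy: "quasi_young_fun \<Phi>" and \<Omega>: "\<Omega> \<in> sets lebesgue" "bounded \<Omega>" and l: "l > 0"
    and \<mu>m: "\<mu> \<in> borel_measurable (lebesgue_on \<Omega>)"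
    and int: "ereal_integral_on \<Omega> (\<lambda>x. \<Phi> (\<bar>\<mu> x\<bar> / l)) \<le> 1"
    and E: "E \<ge> 0"
  shows "\<exists>Q \<in> borel_measurable lborel. (\<forall>x\<in>\<Omega>. e2ennreal (max 0 (\<Phi> (\<bar>\<mu> x\<bar> / l))) + ennreal E \<le> Q x)
            \<and> integral\<^sup>N lborel Q < \<infinity>"
proof -
  define f where "f x = (if x \<in> \<Omega> then \<mu> x else 0)" for x
  have fm: "f \<in> borel_measurable lebesgue" unfolding f_def by (rule borel_measurable_if_I[OF \<mu>m \<Omega>(1)])
  define h where "h t = e2ennreal (max 0 (\<Phi> \<bar>t\<bar>))" for t
  have hm: "h \<in> borel_measurable borel"
  proof -
    have [measurable]: "(\<lambda>t. \<Phi> \<bar>t\<bar>) \<in> borel_measurable borel"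
      using lsc_abs_measurable qy quasi_young_fun_def by blast
    show ?thesis unfolding h_def by measurable
  qed
  define Q0 where "Q0 x = (h (f x / l) + ennreal E) * indicator \<Omega> x" for x
  note [measurable] = hm fm \<Omega>(1)
  have Q0m: "Q0 \<in> borel_measurable lebesgue" unfolding Q0_def by measurable
  have eq\<Omega>: "h (f x / l) = e2ennreal (max 0 (\<Phi> (\<bar>\<mu> x\<bar> / l)))" if "x \<in> \<Omega>" for x
    using that l by (simp add: h_def f_def)
  have "integral\<^sup>N lebesgue Q0 = (\<integral>\<^sup>+x. h (f x / l) * indicator \<Omega> x + ennreal E * indicator \<Omega> x \<partial>lebesgue)"
    unfolding Q0_def by (simp add: distrib_right)
  also have "\<dots> = (\<integral>\<^sup>+x. h (f x / l) * indicator \<Omega> x \<partial>lebesgue) + (\<integral>\<^sup>+x. ennreal E * indicator \<Omega> x \<partial>lebesgue)"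
    by (rule nn_integral_add) measurable
  also have "(\<integral>\<^sup>+x. h (f x / l) * indicator \<Omega> x \<partial>lebesgue) = (\<integral>\<^sup>+x. e2ennreal (max 0 (\<Phi> (\<bar>\<mu> x\<bar> / l))) \<partial>lebesgue_on \<Omega>)"
  proof -
    have "(\<integral>\<^sup>+x. e2ennreal (max 0 (\<Phi> (\<bar>\<mu> x\<bar> / l))) \<partial>lebesgue_on \<Omega>)
        = (\<integral>\<^sup>+x. e2ennreal (max 0 (\<Phi> (\<bar>\<mu> x\<bar> / l))) * indicator \<Omega> x \<partial>lebesgue)"
      by (rule nn_integral_restrict_space) (simp add: \<Omega>(1))
    also have "\<dots> = (\<integral>\<^sup>+x. h (f x / l) * indicator \<Omega> x \<partial>lebesgue)"
      by (rule nn_integral_cong) (auto simp: eq\<Omega> indicator_def)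
    finally show ?thesis by simp
  qed
  also have "(\<integral>\<^sup>+x. ennreal E * indicator \<Omega> x \<partial>lebesgue) = ennreal E * emeasure lebesgue \<Omega>"
    by (rule nn_integral_cmult_indicator[OF \<Omega>(1)])
  finally have "integral\<^sup>N lebesgue Q0 = (\<integral>\<^sup>+x. e2ennreal (max 0 (\<Phi> (\<bar>\<mu> x\<bar> / l))) \<partial>lebesgue_on \<Omega>) + ennreal E * emeasure lebesgue \<Omega>" .
  moreover have "(\<integral>\<^sup>+x. e2ennreal (max 0 (\<Phi> (\<bar>\<mu> x\<bar> / l))) \<partial>lebesgue_on \<Omega>) < \<infinity>"
    by (rule pos_finite[OF qy \<Omega> l int])
  moreover have "ennreal E * emeasure lebesgue \<Omega> < \<infinity>"
    using lebesgue_finite[OF \<Omega>] by (simp add: ennreal_mult_less_top)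
  ultimately have Q0f: "integral\<^sup>N lebesgue Q0 < \<infinity>" by (simp add: top.not_eq_extremum)
  obtain Q where Q: "Q \<in> borel_measurable lborel" "\<forall>x. Q0 x \<le> Q x" "integral\<^sup>N lborel Q = integral\<^sup>N lebesgue Q0"
    using borel_majorant[OF Q0m] by blast
  show ?thesis
  proof (intro bexI conjI ballI)
    fix x assume "x \<in> \<Omega>"
    thus "e2ennreal (max 0 (\<Phi> (\<bar>\<mu> x\<bar> / l))) + ennreal E \<le> Q x"
      using Q(2)[rule_format, of x] by (simp add: Q0_def eq\<Omega>)
  qed (use Q Q0f in auto)
qed

theorem mainTheorem2:
  fixes \<Omega>1 \<Omega>2 :: "(real ^ 'n) set" and \<Phi> :: "real \<Rightarrow> ereal"
    and \<mu>1 \<mu>2 :: "real ^ 'n \<Rightarrow> real"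
  assumes "\<Omega>1 \<in> sets lebesgue" "bounded \<Omega>1"
    and "\<Omega>2 \<in> sets lebesgue" "bounded \<Omega>2"
    and "quasi_young_fun \<Phi>"
    and "(\<exists>C>0. \<forall>x\<ge>0. \<forall>y\<ge>0. \<Phi> (x * y) \<le> ereal C * \<Phi> x * \<Phi> y)
       \<or> ((\<exists>C1\<ge>0. \<exists>C2\<ge>0. \<forall>x\<ge>0. \<forall>y\<ge>0.
              \<Phi> (x * y) \<le> ereal C1 * ereal x * \<Phi> y + ereal C2 * \<Phi> x * ereal y)
           \<and> ((\<lambda>t. \<Phi> t / ereal t) \<longlongrightarrow> \<infinity>) at_top)"
    and "\<mu>1 \<in> orlicz_space \<Phi> \<Omega>1" "\<mu>2 \<in> orlicz_space \<Phi> \<Omega>2"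
  shows "tensor \<mu>1 \<mu>2 \<in> orlicz_space \<Phi> (\<Omega>1 \<times> \<Omega>2)"
proof -
  note \<Omega>1 = assms(1,2) and \<Omega>2 = assms(3,4) and qy = assms(5)
  obtain D E where DE: "D > 0" "E > 0" and core: "\<forall>x\<ge>0. \<forall>y\<ge>0. \<forall>a b. \<Phi> x = ereal a \<longrightarrow> \<Phi> y = ereal b \<longrightarrow>
            \<Phi> (x*y) \<le> ereal (D * (max 0 a + E) * (max 0 b + E))"
    using qy_core[OF qy assms(6)] by blast
  have m1: "\<mu>1 \<in> borel_measurable (lebesgue_on \<Omega>1)" and m2: "\<mu>2 \<in> borel_measurable (lebesgue_on \<Omega>2)"
    using orlicz_get assms(7,8) by blast+
  obtain l1 where l1: "l1 > 0" "ereal_integral_on \<Omega>1 (\<lambda>x. \<Phi> (\<bar>\<mu>1 x\<bar> / l1)) \<le> 1"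
    using orlicz_get(2)[OF assms(7)] by blast
  obtain l2 where l2: "l2 > 0" "ereal_integral_on \<Omega>2 (\<lambda>x. \<Phi> (\<bar>\<mu>2 x\<bar> / l2)) \<le> 1"
    using orlicz_get(2)[OF assms(8)] by blast
  obtain Q1 where Q1: "Q1 \<in> borel_measurable lborel"
      "\<forall>x\<in>\<Omega>1. e2ennreal (max 0 (\<Phi> (\<bar>\<mu>1 x\<bar> / l1))) + ennreal E \<le> Q1 x" "integral\<^sup>N lborel Q1 < \<infinity>"
    using Q_lemma[OF qy \<Omega>1 l1(1) m1 l1(2), of E] DE by auto
  obtain Q2 where Q2: "Q2 \<in> borel_measurable lborel"
      "\<forall>x\<in>\<Omega>2. e2ennreal (max 0 (\<Phi> (\<bar>\<mu>2 x\<bar> / l2))) + ennreal E \<le> Q2 x" "integral\<^sup>N lborel Q2 < \<infinity>"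
    using Q_lemma[OF qy \<Omega>2 l2(1) m2 l2(2), of E] DE by auto
  define H where "H z = ennreal D * Q1 (fst z) * Q2 (snd z)" for z :: "(real^'n) \<times> (real^'n)"
  have Hm2: "H \<in> borel_measurable ((lborel :: (real^'n) measure) \<Otimes>\<^sub>M lborel)"
  proof -
    note [measurable] = Q1(1) Q2(1)
    show ?thesis unfolding H_def by measurable
  qed
  have Hm: "H \<in> borel_measurable (lborel :: ((real^'n) \<times> (real^'n)) measure)"
    using Hm2 by (simp add: lborel_prod)
  have HI: "integral\<^sup>N lborel H = ennreal D * integral\<^sup>N lborel Q1 * integral\<^sup>N lborel Q2"
  proof -
    have "integral\<^sup>N (lborel :: ((real^'n) \<times> (real^'n)) measure) H = integral\<^sup>N ((lborel :: (real^'n) measure) \<Otimes>\<^sub>M lborel) H"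
      by (simp add: lborel_prod)
    also have "\<dots> = (\<integral>\<^sup>+x. \<integral>\<^sup>+y. H (x, y) \<partial>lborel \<partial>lborel)"
      by (rule lborel.nn_integral_fst[OF Hm2, symmetric])
    also have "\<dots> = (\<integral>\<^sup>+x. (ennreal D * Q1 x) * integral\<^sup>N lborel Q2 \<partial>lborel)"
      unfolding H_def by (rule nn_integral_cong) (simp add: nn_integral_cmult[OF Q2(1)])
    also have "\<dots> = (\<integral>\<^sup>+x. ennreal D * Q1 x \<partial>lborel) * integral\<^sup>N lborel Q2"
      by (rule nn_integral_multc) (use Q1(1) in measurable)
    also have "\<dots> = ennreal D * integral\<^sup>N lborel Q1 * integral\<^sup>N lborel Q2"
      by (simp add: nn_integral_cmult[OF Q1(1)])
    finally show ?thesis .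
  qed
  have HIf: "integral\<^sup>N lborel H < \<infinity>"
    unfolding HI using Q1(3) Q2(3) by (simp add: ennreal_mult_less_top)
  then obtain r where r: "r \<ge> 0" "integral\<^sup>N lborel H = ennreal r"
    by (cases "integral\<^sup>N lborel H") auto
  define s where "s = 1 / (r + 1)"
  have s: "0 < s" "s \<le> 1" using r unfolding s_def by auto
  have sI: "ennreal s * integral\<^sup>N lborel H \<le> 1"
  proof -
    have "ennreal s * integral\<^sup>N lborel H = ennreal (s * r)" using r s by (simp add: ennreal_mult)
    also have "s * r \<le> 1" using r unfolding s_def by (simp add: field_simps)
    hence "ennreal (s * r) \<le> 1" by (simp add: ennreal_le_1)
    finally show ?thesis .
  qed
  define l where "l = l1 * l2 / s"
  have l: "l > 0" unfolding l_def using l1 l2 s by simp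
  define G where "G z = e2ennreal (max 0 (\<Phi> (\<bar>tensor \<mu>1 \<mu>2 z\<bar> / l)))" for z
  have pw: "G z * indicator (\<Omega>1 \<times> \<Omega>2) z \<le> ennreal s * H z" for z
  proof (cases "z \<in> \<Omega>1 \<times> \<Omega>2")
    case False thus ?thesis by simp
  next
    case True
    obtain x1 x2 where z: "z = (x1, x2)" by (cases z)
    have x: "x1 \<in> \<Omega>1" "x2 \<in> \<Omega>2" using True z by auto
    define a where "a = \<bar>\<mu>1 x1\<bar> / l1"
    define b where "b = \<bar>\<mu>2 x2\<bar> / l2"
    have ab: "a \<ge> 0" "b \<ge> 0" using l1 l2 by (auto simp: a_def b_def)
    have arg: "\<bar>tensor \<mu>1 \<mu>2 z\<bar> / l = s * (a * b)"
      using l1 l2 s unfolding z tensor_def a_def b_def l_def by (simp add: abs_mult field_simps)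
    have "G z \<le> ennreal s * e2ennreal (max 0 (\<Phi> (a*b)))"
      unfolding G_def arg by (rule qy_scale_enn[OF qy]) (use s ab in auto)
    also have "\<dots> \<le> ennreal s * (ennreal D * (e2ennreal (max 0 (\<Phi> a)) + ennreal E) * (e2ennreal (max 0 (\<Phi> b)) + ennreal E))"
      by (intro mult_left_mono qy_enn_bound[OF qy DE core ab]) simp
    also have "\<dots> \<le> ennreal s * H z"
      unfolding H_def z fst_conv snd_conv a_def b_def
      using Q1(2) Q2(2) x by (intro mult_left_mono mult_mono) auto
    finally show ?thesis using True by simp
  qed
  have Om: "\<Omega>1 \<times> \<Omega>2 \<in> sets lebesgue" by (rule times_lebesgue[OF \<Omega>1(1) \<Omega>2(1)])
  have "(\<integral>\<^sup>+z. G z \<partial>lebesgue_on (\<Omega>1 \<times> \<Omega>2)) = (\<integral>\<^sup>+z. G z * indicator (\<Omega>1 \<times> \<Omega>2) z \<partial>lebesgue)"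
    by (rule nn_integral_restrict_space) (simp add: Om)
  also have "\<dots> = (\<integral>\<^sup>+z. G z * indicator (\<Omega>1 \<times> \<Omega>2) z \<partial>lborel)"
    by (rule nn_integral_completion)
  also have "\<dots> \<le> (\<integral>\<^sup>+z. ennreal s * H z \<partial>lborel)"
    by (rule nn_integral_mono) (rule pw)
  also have "\<dots> = ennreal s * integral\<^sup>N lborel H"
    by (rule nn_integral_cmult[OF Hm])
  also have "\<dots> \<le> 1" by (rule sI)
  finally have Gle: "(\<integral>\<^sup>+z. G z \<partial>lebesgue_on (\<Omega>1 \<times> \<Omega>2)) \<le> 1" .
  have intle: "ereal_integral_on (\<Omega>1 \<times> \<Omega>2) (\<lambda>z. \<Phi> (\<bar>tensor \<mu>1 \<mu>2 z\<bar> / l)) \<le> 1"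
  proof -
    have "enn2ereal (\<integral>\<^sup>+z. G z \<partial>lebesgue_on (\<Omega>1 \<times> \<Omega>2)) \<le> 1"
      using Gle by (simp add: less_eq_ennreal.rep_eq one_ennreal.rep_eq)
    thus ?thesis unfolding ereal_integral_on_def G_def
      by (meson ereal_diff_le_self enn2ereal_nonneg order.trans)
  qed
  have "luxemburg_norm \<Phi> (\<Omega>1 \<times> \<Omega>2) (tensor \<mu>1 \<mu>2) \<le> ereal l"
    unfolding luxemburg_norm_def using l intle by (intro Inf_lower) blast
  hence norm: "luxemburg_norm \<Phi> (\<Omega>1 \<times> \<Omega>2) (tensor \<mu>1 \<mu>2) < \<infinity>"
    using le_less_trans by fastforce
  define f1 where "f1 x = (if x \<in> \<Omega>1 then \<mu>1 x else 0)" for x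
  define f2 where "f2 x = (if x \<in> \<Omega>2 then \<mu>2 x else 0)" for x
  have f1m: "f1 \<in> borel_measurable lebesgue" unfolding f1_def by (rule borel_measurable_if_I[OF m1 \<Omega>1(1)])
  have f2m: "f2 \<in> borel_measurable lebesgue" unfolding f2_def by (rule borel_measurable_if_I[OF m2 \<Omega>2(1)])
  have "(\<lambda>z. f1 (fst z) * f2 (snd z)) \<in> borel_measurable (lebesgue :: ((real^'n) \<times> (real^'n)) measure)"
    by (rule prod_meas[OF f1m f2m])
  moreover have "(\<lambda>z. f1 (fst z) * f2 (snd z)) = (\<lambda>z. if z \<in> \<Omega>1 \<times> \<Omega>2 then tensor \<mu>1 \<mu>2 z else 0)"
    by (auto simp: fun_eq_iff f1_def f2_def tensor_def)
  ultimately have "tensor \<mu>1 \<mu>2 \<in> borel_measurable (lebesgue_on (\<Omega>1 \<times> \<Omega>2))"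
    by (intro borel_measurable_if_D) simp
  with norm show ?thesis unfolding orlicz_space_def by simp
qed


end
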